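(* Let $(G,\mathcal J)$ be a generalized Kähler structure on a Courant algebroid $E$ and $D$ a Levi-Civita connection of $G$. For $u\in E$ let $A_u$ be the endomorphism $v\mapsto (D_v\mathcal J)u$ of $E$ and $A_u^{\mathrm{sym}}$ its $\langle\cdot,\cdot\rangle$-symmetric part. Then the generalized connection $$\tilde D_uv=D_uv-\tfrac12\mathcal J(D_u\mathcal J)v-\tfrac14\{A_u^{\mathrm{sym}},\mathcal J\}v$$ (where $\{X,Y\}=XY+YX$) is a torsion-free generalized connection satisfying $\tilde DG=0$ and $\tilde D\mathcal J=0$.
   Context: A Courant algebroid on a manifold $M$ is a real vector bundle $E\to M$ with a nondegenerate symmetric bilinear form $\langle\cdot,\cdot\rangle$, an $\mathbb R$-bilinear bracket $[\cdot,\cdot]$ on $\Gamma(E)$ and a bundle map $\pi:E\to TM$ such that for all $u,v,w\in\Gamma(E)$, $f\in C^\infty(M)$: $[u,[v,w]]=[[u,v],w]+[v,[u,w]]$; $\pi([u,v])=[\pi(u),\pi(v)]$; $[u,fv]=\pi(u)(f)v+f[u,v]$; $\pi(u)\langle v,w\rangle=\langle[u,v],w\rangle+\langle v,[u,w]\rangle$; $2\langle[u,u],v\rangle=\pi(v)\langle u,u\rangle$. A generalized connection is an $\mathbb R$-linear $D:\Gamma(E)\to\Gamma(E^*\otimes E)$ with $D_u(fv)=\pi(u)(f)v+fD_uv$ and $\pi(u)\langle v,w\rangle=\langle D_uv,w\rangle+\langle v,D_uw\rangle$; its torsion is $T^D(u,v)=D_uv-D_vu-[u,v]+(Du)^*v$,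 with $(Du)^*$ the $\langle\cdot,\cdot\rangle$-adjoint of $w\mapsto D_wu$. A generalized metric is a subbundle $E_+$ on which $\langle\cdot,\cdot\rangle$ is nondegenerate; with $E_-=E_+^\perp$ it gives $G=\langle\cdot,\cdot\rangle|_{E_+}-\langle\cdot,\cdot\rangle|_{E_-}$ and $G^{\mathrm{end}}=\pm\mathrm{Id}$ on $E_\pm$. A Levi-Civita connection of $G$ is a torsion-free generalized connection with $DG=0$. A generalized almost complex structure is a $\langle\cdot,\cdot\rangle$-orthogonal $\mathcal J$ with $\mathcal J^2=-\mathrm{Id}$, integrable if $N_{\mathcal J}(u,v)=[\mathcal Ju,\mathcal Jv]-[u,v]-\mathcal J([\mathcal Ju,v]+[u,\mathcal Jv])=0$. $(G,\mathcal J)$ is generalized almost Hermitian if $G(\mathcal Ju,\mathcal Jv)=G(u,v)$, and generalized Kähler if moreover $\mathcal J$ and $G^{\mathrm{end}}\mathcal J$ are integrable. *)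

theory Defs
  imports Complex_Main
begin

text \<open>Algebraic (sections-level) model of a Courant algebroid.
  'f plays the role of C^infinity(M) (a commutative real algebra),
  'e the role of Gamma(E) (a real vector space with a C^infinity(M)-action sm).
  anc u is the vector field pi(u), acting as a derivation on functions.
  ip is the pairing, br the Courant (Dorfman) bracket.\<close>

definition module_action :: "('f::{comm_ring_1,real_algebra_1} \<Rightarrow> 'e::real_vector \<Rightarrow> 'e) \<Rightarrow> bool" where
  "module_action sm \<longleftrightarrow>
     (\<forall>f g u. sm (f * g) u = sm f (sm g u)) \<and>
     (\<forall>u. sm 1 u = u) \<and>
     (\<forall>f g u. sm (f + g) u = sm f u + sm g u) \<and>
     (\<forall>f u v. sm f (u + v) = sm f u + sm f v) \<and>
     (\<forall>c u. sm (of_real c) u = c *\<^sub>R u)"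

text \<open>C^infinity(M)-linear endomorphisms of sections (= bundle endomorphisms).\<close>
definition f_linear :: "('f::{comm_ring_1,real_algebra_1} \<Rightarrow> 'e::real_vector \<Rightarrow> 'e) \<Rightarrow> ('e \<Rightarrow> 'e) \<Rightarrow> bool" where
  "f_linear sm T \<longleftrightarrow> (\<forall>u v. T (u + v) = T u + T v) \<and> (\<forall>f u. T (sm f u) = sm f (T u))"

text \<open>C^infinity(M)-linear functionals on sections (= sections of E^*).\<close>
definition f_linear_functional :: "('f::{comm_ring_1,real_algebra_1} \<Rightarrow> 'e::real_vector \<Rightarrow> 'e) \<Rightarrow> ('e \<Rightarrow> 'f) \<Rightarrow> bool" where
  "f_linear_functional sm phi \<longleftrightarrow> (\<forall>u v. phi (u + v) = phi u + phi v) \<and> (\<forall>f u. phi (sm f u) = f * phi u)"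

definition derivation :: "('f::{comm_ring_1,real_algebra_1} \<Rightarrow> 'f) \<Rightarrow> bool" where
  "derivation X \<longleftrightarrow> (\<forall>f g. X (f + g) = X f + X g) \<and> (\<forall>c f. X (c *\<^sub>R f) = c *\<^sub>R X f) \<and>
     (\<forall>f g. X (f * g) = f * X g + g * X f)"

definition courant_algebroid ::
  "('f::{comm_ring_1,real_algebra_1} \<Rightarrow> 'e::real_vector \<Rightarrow> 'e) \<Rightarrow> ('e \<Rightarrow> 'e \<Rightarrow> 'f) \<Rightarrow> ('e \<Rightarrow> 'e \<Rightarrow> 'e) \<Rightarrow> ('e \<Rightarrow> 'f \<Rightarrow> 'f) \<Rightarrow> bool" where
  "courant_algebroid sm ip br anc \<longleftrightarrow>
     module_action sm \<and>
     \<comment> \<open>symmetric C-infinity-bilinear pairing\<close>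
     (\<forall>u v. ip u v = ip v u) \<and>
     (\<forall>v. f_linear_functional sm (\<lambda>w. ip v w)) \<and>
     \<comment> \<open>nondegeneracy: the pairing induces an isomorphism Gamma(E) = Gamma(E^*)\<close>
     (\<forall>phi. f_linear_functional sm phi \<longrightarrow> (\<exists>!v. \<forall>w. phi w = ip v w)) \<and>
     \<comment> \<open>R-bilinear bracket\<close>
     (\<forall>u v w. br (u + v) w = br u w + br v w) \<and>
     (\<forall>u v w. br u (v + w) = br u v + br u w) \<and>
     (\<forall>c u v. br (c *\<^sub>R u) v = c *\<^sub>R br u v) \<and>
     (\<forall>c u v. br u (c *\<^sub>R v) = c *\<^sub>R br u v) \<and>
     \<comment> \<open>anchor: bundle map to TM\<close>
     (\<forall>u. derivation (anc u)) \<and>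
     (\<forall>u v h. anc (u + v) h = anc u h + anc v h) \<and>
     (\<forall>f u h. anc (sm f u) h = f * anc u h) \<and>
     \<comment> \<open>Courant algebroid axioms\<close>
     (\<forall>u v w. br u (br v w) = br (br u v) w + br v (br u w)) \<and>
     (\<forall>u v h. anc (br u v) h = anc u (anc v h) - anc v (anc u h)) \<and>
     (\<forall>u v f. br u (sm f v) = sm (anc u f) v + sm f (br u v)) \<and>
     (\<forall>u v w. anc u (ip v w) = ip (br u v) w + ip v (br u w)) \<and>
     (\<forall>u v. 2 * ip (br u u) v = anc v (ip u u))"

definition adj :: "('e \<Rightarrow> 'e \<Rightarrow> 'f) \<Rightarrow> ('e \<Rightarrow> 'e) \<Rightarrow> 'e \<Rightarrow> 'e" where
  "adj ip T v = (THE w. \<forall>x. ip w x = ip v (T x))"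

text \<open>Generalized connection: D u v = D_u v; E^*\<otimes>E-valued, i.e. C-infinity-linear in u.\<close>
definition gen_connection ::
  "('f::{comm_ring_1,real_algebra_1} \<Rightarrow> 'e::real_vector \<Rightarrow> 'e) \<Rightarrow> ('e \<Rightarrow> 'e \<Rightarrow> 'f) \<Rightarrow> ('e \<Rightarrow> 'f \<Rightarrow> 'f) \<Rightarrow> ('e \<Rightarrow> 'e \<Rightarrow> 'e) \<Rightarrow> bool" where
  "gen_connection sm ip anc D \<longleftrightarrow>
     (\<forall>u v w. D u (v + w) = D u v + D u w) \<and>
     (\<forall>c u v. D u (c *\<^sub>R v) = c *\<^sub>R D u v) \<and>
     (\<forall>u. f_linear sm (\<lambda>x. D x u)) \<and>
     (\<forall>u f v. D u (sm f v) = sm (anc u f) v + sm f (D u v)) \<and>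
     (\<forall>u v w. anc u (ip v w) = ip (D u v) w + ip v (D u w))"

definition torsion :: "('e \<Rightarrow> 'e \<Rightarrow> 'f) \<Rightarrow> ('e \<Rightarrow> 'e \<Rightarrow> 'e) \<Rightarrow> ('e::real_vector \<Rightarrow> 'e \<Rightarrow> 'e) \<Rightarrow> 'e \<Rightarrow> 'e \<Rightarrow> 'e" where
  "torsion ip br D u v = D u v - D v u - br u v + adj ip (\<lambda>w. D w u) v"

definition torsion_free :: "('e \<Rightarrow> 'e \<Rightarrow> 'f) \<Rightarrow> ('e \<Rightarrow> 'e \<Rightarrow> 'e) \<Rightarrow> ('e::real_vector \<Rightarrow> 'e \<Rightarrow> 'e) \<Rightarrow> bool" where
  "torsion_free ip br D \<longleftrightarrow> (\<forall>u v. torsion ip br D u v = 0)"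

text \<open>Generalized metric, encoded by G^end (= +Id on E_+, -Id on E_- = E_+^perp).\<close>
definition gen_metric ::
  "('f::{comm_ring_1,real_algebra_1} \<Rightarrow> 'e::real_vector \<Rightarrow> 'e) \<Rightarrow> ('e \<Rightarrow> 'e \<Rightarrow> 'f) \<Rightarrow> ('e \<Rightarrow> 'e) \<Rightarrow> bool" where
  "gen_metric sm ip Gend \<longleftrightarrow> f_linear sm Gend \<and> (\<forall>u. Gend (Gend u) = u) \<and>
     (\<forall>u v. ip (Gend u) v = ip u (Gend v))"

text \<open>G(u,v) = <u,v>|E_+ - <u,v>|E_- = <G^end u, v>.\<close>
definition Gmet :: "('e \<Rightarrow> 'e \<Rightarrow> 'f) \<Rightarrow> ('e \<Rightarrow> 'e) \<Rightarrow> 'e \<Rightarrow> 'e \<Rightarrow> 'f" where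
  "Gmet ip Gend u v = ip (Gend u) v"

definition parallel_metric ::
  "('e \<Rightarrow> 'e \<Rightarrow> 'f::{comm_ring_1,real_algebra_1}) \<Rightarrow> ('e \<Rightarrow> 'f \<Rightarrow> 'f) \<Rightarrow> ('e \<Rightarrow> 'e) \<Rightarrow> ('e \<Rightarrow> 'e \<Rightarrow> 'e) \<Rightarrow> bool" where
  "parallel_metric ip anc Gend D \<longleftrightarrow>
     (\<forall>u v w. anc u (Gmet ip Gend v w) = Gmet ip Gend (D u v) w + Gmet ip Gend v (D u w))"

definition covD_end :: "('e \<Rightarrow> 'e \<Rightarrow> 'e::real_vector) \<Rightarrow> ('e \<Rightarrow> 'e) \<Rightarrow> 'e \<Rightarrow> 'e \<Rightarrow> 'e" where
  "covD_end D J u v = D u (J v) - J (D u v)"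

definition parallel_end :: "('e \<Rightarrow> 'e \<Rightarrow> 'e::real_vector) \<Rightarrow> ('e \<Rightarrow> 'e) \<Rightarrow> bool" where
  "parallel_end D J \<longleftrightarrow> (\<forall>u v. covD_end D J u v = 0)"

definition levi_civita ::
  "('f::{comm_ring_1,real_algebra_1} \<Rightarrow> 'e::real_vector \<Rightarrow> 'e) \<Rightarrow> ('e \<Rightarrow> 'e \<Rightarrow> 'f) \<Rightarrow> ('e \<Rightarrow> 'e \<Rightarrow> 'e) \<Rightarrow> ('e \<Rightarrow> 'f \<Rightarrow> 'f) \<Rightarrow> ('e \<Rightarrow> 'e) \<Rightarrow> ('e \<Rightarrow> 'e \<Rightarrow> 'e) \<Rightarrow> bool" where
  "levi_civita sm ip br anc Gend D \<longleftrightarrow>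
     gen_connection sm ip anc D \<and> torsion_free ip br D \<and> parallel_metric ip anc Gend D"

definition gen_almost_complex ::
  "('f::{comm_ring_1,real_algebra_1} \<Rightarrow> 'e::real_vector \<Rightarrow> 'e) \<Rightarrow> ('e \<Rightarrow> 'e \<Rightarrow> 'f) \<Rightarrow> ('e \<Rightarrow> 'e) \<Rightarrow> bool" where
  "gen_almost_complex sm ip J \<longleftrightarrow> f_linear sm J \<and> (\<forall>u v. ip (J u) (J v) = ip u v) \<and>
     (\<forall>u. J (J u) = - u)"

definition nijenhuis :: "('e \<Rightarrow> 'e \<Rightarrow> 'e::real_vector) \<Rightarrow> ('e \<Rightarrow> 'e) \<Rightarrow> 'e \<Rightarrow> 'e \<Rightarrow> 'e" where
  "nijenhuis br J u v = br (J u) (J v) - br u v - J (br (J u) v + br u (J v))"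

definition integrable :: "('e \<Rightarrow> 'e \<Rightarrow> 'e::real_vector) \<Rightarrow> ('e \<Rightarrow> 'e) \<Rightarrow> bool" where
  "integrable br J \<longleftrightarrow> (\<forall>u v. nijenhuis br J u v = 0)"

definition gen_almost_hermitian ::
  "('f::{comm_ring_1,real_algebra_1} \<Rightarrow> 'e::real_vector \<Rightarrow> 'e) \<Rightarrow> ('e \<Rightarrow> 'e \<Rightarrow> 'f) \<Rightarrow> ('e \<Rightarrow> 'e) \<Rightarrow> ('e \<Rightarrow> 'e) \<Rightarrow> bool" where
  "gen_almost_hermitian sm ip Gend J \<longleftrightarrow> gen_metric sm ip Gend \<and> gen_almost_complex sm ip J \<and>
     (\<forall>u v. Gmet ip Gend (J u) (J v) = Gmet ip Gend u v)"

definition gen_kaehler ::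
  "('f::{comm_ring_1,real_algebra_1} \<Rightarrow> 'e::real_vector \<Rightarrow> 'e) \<Rightarrow> ('e \<Rightarrow> 'e \<Rightarrow> 'f) \<Rightarrow> ('e \<Rightarrow> 'e \<Rightarrow> 'e) \<Rightarrow> ('e \<Rightarrow> 'e) \<Rightarrow> ('e \<Rightarrow> 'e) \<Rightarrow> bool" where
  "gen_kaehler sm ip br Gend J \<longleftrightarrow> gen_almost_hermitian sm ip Gend J \<and>
     integrable br J \<and> integrable br (Gend \<circ> J)"

definition A_end :: "('e \<Rightarrow> 'e \<Rightarrow> 'e::real_vector) \<Rightarrow> ('e \<Rightarrow> 'e) \<Rightarrow> 'e \<Rightarrow> 'e \<Rightarrow> 'e" where
  "A_end D J u v = covD_end D J v u"

definition A_sym :: "('e \<Rightarrow> 'e \<Rightarrow> 'f) \<Rightarrow> ('e \<Rightarrow> 'e \<Rightarrow> 'e::real_vector) \<Rightarrow> ('e \<Rightarrow> 'e) \<Rightarrow> 'e \<Rightarrow> 'e \<Rightarrow> 'e" where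
  "A_sym ip D J u v = (1/2) *\<^sub>R (A_end D J u v + adj ip (A_end D J u) v)"

definition D_tilde :: "('e \<Rightarrow> 'e \<Rightarrow> 'f) \<Rightarrow> ('e \<Rightarrow> 'e \<Rightarrow> 'e::real_vector) \<Rightarrow> ('e \<Rightarrow> 'e) \<Rightarrow> 'e \<Rightarrow> 'e \<Rightarrow> 'e" where
  "D_tilde ip D J u v = D u v - (1/2) *\<^sub>R J (covD_end D J u v)
     - (1/4) *\<^sub>R (A_sym ip D J u (J v) + J (A_sym ip D J u v))"

end

theory Submission
  imports Defs
begin

locale GKL =
  fixes sm :: "'f::{comm_ring_1,real_algebra_1} \<Rightarrow> 'e::real_vector \<Rightarrow> 'e"
    and ip :: "'e \<Rightarrow> 'e \<Rightarrow> 'f" and br :: "'e \<Rightarrow> 'e \<Rightarrow> 'e" and anc :: "'e \<Rightarrow> 'f \<Rightarrow> 'f"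
    and G J :: "'e \<Rightarrow> 'e" and D :: "'e \<Rightarrow> 'e \<Rightarrow> 'e"
  assumes CA: "courant_algebroid sm ip br anc"
    and GK: "gen_kaehler sm ip br G J"
    and LC: "levi_civita sm ip br anc G D"
begin

lemma MA: "module_action sm" using CA unfolding courant_algebroid_def by blast
lemma sm_mult: "sm (f * g) u = sm f (sm g u)" using MA unfolding module_action_def by blast
lemma sm_one: "sm 1 u = u" using MA unfolding module_action_def by blast
lemma sm_addf: "sm (f + g) u = sm f u + sm g u" using MA unfolding module_action_def by blast
lemma sm_add: "sm f (u + v) = sm f u + sm f v" using MA unfolding module_action_def by blast
lemma sm_real: "sm (of_real c) u = c *\<^sub>R u" using MA unfolding module_action_def by blast
lemma scaleR_sm: "c *\<^sub>R u = sm (of_real c) u" by (simp add: sm_real)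
lemma sm_zero: "sm f 0 = 0" using sm_add[of f 0 0] by simp
lemma sm_neg: "sm f (- u) = - sm f u" using sm_add[of f u "-u"] by (simp add: sm_zero add_eq_0_iff2)
lemma sm_diff: "sm f (u - v) = sm f u - sm f v" using sm_add[of f u "-v"] by (simp add: sm_neg)
lemma sm_scaleR: "sm f (c *\<^sub>R u) = c *\<^sub>R sm f u"
  by (simp add: scaleR_sm sm_mult[symmetric] mult.commute)

lemma ip_sym_all: "\<forall>u v. ip u v = ip v u" using CA unfolding courant_algebroid_def by (elim conjE)
lemma ip_sym: "ip u v = ip v u" using ip_sym_all by metis
lemma ipfl_all: "\<forall>v. f_linear_functional sm (ip v)" using CA unfolding courant_algebroid_def by (elim conjE)
lemma ipfl: "f_linear_functional sm (ip v)" using ipfl_all by blast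
lemma nondeg_all: "\<forall>phi. f_linear_functional sm phi \<longrightarrow> (\<exists>!v. \<forall>w. phi w = ip v w)" using CA unfolding courant_algebroid_def by (elim conjE)
lemmas nondeg = nondeg_all[rule_format]
lemma ip_add_right: "ip v (u + w) = ip v u + ip v w" using ipfl unfolding f_linear_functional_def by blast
lemma ip_sm_right: "ip v (sm f u) = f * ip v u" using ipfl unfolding f_linear_functional_def by blast
lemma ip_add_left: "ip (u + w) v = ip u v + ip w v" by (metis ip_sym ip_add_right)
lemma ip_sm_left: "ip (sm f u) v = f * ip u v" by (metis ip_sym ip_sm_right)
lemma ip_scaleR_right: "ip v (c *\<^sub>R u) = c *\<^sub>R ip v u"
  by (simp add: scaleR_sm ip_sm_right scaleR_conv_of_real)
lemma ip_scaleR_left: "ip (c *\<^sub>R u) v = c *\<^sub>R ip u v"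
  by (simp add: scaleR_sm ip_sm_left scaleR_conv_of_real)
lemma ip_zero_right: "ip v 0 = 0" using ip_add_right[of v 0 0] by simp
lemma ip_zero_left: "ip 0 v = 0" using ip_add_left[of 0 0 v] by simp
lemma ip_neg_right: "ip v (- u) = - ip v u" using ip_add_right[of v u "-u"] by (simp add: ip_zero_right add_eq_0_iff2)
lemma ip_neg_left: "ip (- u) v = - ip u v" using ip_add_left[of u "-u" v] by (simp add: ip_zero_left add_eq_0_iff2)
lemma ip_diff_right: "ip v (u - w) = ip v u - ip v w" using ip_add_right[of v u "-w"] by (simp add: ip_neg_right)
lemma ip_diff_left: "ip (u - w) v = ip u v - ip w v" using ip_add_left[of u "-w" v] by (simp add: ip_neg_left)

lemmas ip_lin = ip_add_right ip_add_left ip_scaleR_right ip_scaleR_left ip_zero_right ip_zero_left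
  ip_neg_right ip_neg_left ip_diff_right ip_diff_left

lemma ip_ext: assumes "\<And>w. ip a w = ip b w" shows "a = b"
proof -
  have nd: "\<exists>!v. \<forall>w. ip b w = ip v w" using nondeg[OF ipfl[of b]] .
  show ?thesis using nd assms by metis
qed

lemma adj_ip: assumes "f_linear sm T" shows "ip (adj ip T v) x = ip v (T x)"
proof -
  have fl: "f_linear_functional sm (\<lambda>x. ip v (T x))"
    using assms unfolding f_linear_functional_def f_linear_def by (simp add: ip_add_right ip_sm_right)
  have "\<exists>!w. \<forall>x. ip v (T x) = ip w x" using nondeg[OF fl] .
  then have "\<exists>!w. \<forall>x. ip w x = ip v (T x)" by (metis)
  from theI'[OF this] show ?thesis unfolding adj_def by blast
qed


lemma GAH: "gen_almost_hermitian sm ip G J" using GK unfolding gen_kaehler_def by blast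
lemma intJ: "integrable br J" using GK unfolding gen_kaehler_def by blast
lemma intGJ: "integrable br (G \<circ> J)" using GK unfolding gen_kaehler_def by blast
lemma GM: "gen_metric sm ip G" using GAH unfolding gen_almost_hermitian_def by blast
lemma GAC: "gen_almost_complex sm ip J" using GAH unfolding gen_almost_hermitian_def by blast
lemma Gmet_J_all: "\<forall>u v. Gmet ip G (J u) (J v) = Gmet ip G u v" using GAH unfolding gen_almost_hermitian_def by (elim conjE)
lemma J_fl: "f_linear sm J" using GAC unfolding gen_almost_complex_def by blast
lemma ip_JJ_all: "\<forall>u v. ip (J u) (J v) = ip u v" using GAC unfolding gen_almost_complex_def by (elim conjE)
lemma JJ_all: "\<forall>u. J (J u) = - u" using GAC unfolding gen_almost_complex_def by (elim conjE)
lemma G_fl: "f_linear sm G" using GM unfolding gen_metric_def by blast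
lemma GG_all: "\<forall>u. G (G u) = u" using GM unfolding gen_metric_def by (elim conjE)
lemma ip_G_all: "\<forall>u v. ip (G u) v = ip u (G v)" using GM unfolding gen_metric_def by (elim conjE)

lemma JJ[simp]: "J (J u) = - u" using JJ_all by blast
lemma GG[simp]: "G (G u) = u" using GG_all by blast
lemma ip_JJ: "ip (J u) (J v) = ip u v" using ip_JJ_all by blast
lemma ip_G_left: "ip (G u) v = ip u (G v)" using ip_G_all by blast
lemma Gmet_J: "ip (G (J u)) (J v) = ip (G u) v" using Gmet_J_all unfolding Gmet_def by blast

lemma fl_add: "f_linear sm T \<Longrightarrow> T (u + v) = T u + T v" unfolding f_linear_def by blast
lemma fl_sm: "f_linear sm T \<Longrightarrow> T (sm f u) = sm f (T u)" unfolding f_linear_def by blast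
lemma fl_zero: "f_linear sm T \<Longrightarrow> T 0 = 0" using fl_add[of T 0 0] by simp
lemma fl_neg: "f_linear sm T \<Longrightarrow> T (- u) = - T u" using fl_add[of T u "-u"] fl_zero[of T] by (simp add: add_eq_0_iff2)
lemma fl_diff: "f_linear sm T \<Longrightarrow> T (u - v) = T u - T v" using fl_add[of T u "-v"] fl_neg[of T v] by simp
lemma fl_scaleR: "f_linear sm T \<Longrightarrow> T (c *\<^sub>R u) = c *\<^sub>R T u" using fl_sm[of T "of_real c" u] by (simp add: sm_real)

lemmas J_lin = fl_add[OF J_fl] fl_sm[OF J_fl] fl_zero[OF J_fl] fl_neg[OF J_fl] fl_diff[OF J_fl] fl_scaleR[OF J_fl]
lemmas G_lin = fl_add[OF G_fl] fl_sm[OF G_fl] fl_zero[OF G_fl] fl_neg[OF G_fl] fl_diff[OF G_fl] fl_scaleR[OF G_fl]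

lemma ip_J_left: "ip (J a) b = - ip a (J b)"
proof -
  have "ip (J a) b = ip (J a) (J (- J b))" by (simp add: J_lin)
  also have "\<dots> = - ip a (J b)" by (simp add: ip_JJ ip_lin)
  finally show ?thesis .
qed

lemma GJ: "G (J u) = J (G u)"
proof (rule ip_ext)
  fix w
  have "ip (G (J u)) w = ip (G (J u)) (J (- J w))" by (simp only: J_lin JJ minus_minus)
  also have "\<dots> = ip (G u) (- J w)" by (rule Gmet_J)
  also have "\<dots> = - ip (G u) (J w)" by (simp add: ip_lin)
  also have "\<dots> = ip (J (G u)) w" by (simp add: ip_J_left)
  finally show "ip (G (J u)) w = ip (J (G u)) w" .
qed

lemma DC: "gen_connection sm ip anc D" using LC unfolding levi_civita_def by blast
lemma TF: "torsion_free ip br D" using LC unfolding levi_civita_def by blast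
lemma PM: "parallel_metric ip anc G D" using LC unfolding levi_civita_def by blast
lemma D_add_right_all: "\<forall>u v w. D u (v + w) = D u v + D u w" using DC unfolding gen_connection_def by (elim conjE)
lemma D_scaleR_right_all: "\<forall>c u v. D u (c *\<^sub>R v) = c *\<^sub>R D u v" using DC unfolding gen_connection_def by (elim conjE)
lemma D_fl_all: "\<forall>u. f_linear sm (\<lambda>x. D x u)" using DC unfolding gen_connection_def by (elim conjE)
lemma D_leib_all: "\<forall>u f v. D u (sm f v) = sm (anc u f) v + sm f (D u v)" using DC unfolding gen_connection_def by (elim conjE)
lemma D_metric_all: "\<forall>u v w. anc u (ip v w) = ip (D u v) w + ip v (D u w)" using DC unfolding gen_connection_def by (elim conjE)
lemma PM_all: "\<forall>u v w. anc u (Gmet ip G v w) = Gmet ip G (D u v) w + Gmet ip G v (D u w)" using PM unfolding parallel_metric_def .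

lemma D_add_right: "D u (v + w) = D u v + D u w" using D_add_right_all by blast
lemma D_scaleR_right: "D u (c *\<^sub>R v) = c *\<^sub>R D u v" using D_scaleR_right_all by blast
lemma D_fl: "f_linear sm (\<lambda>x. D x u)" using D_fl_all by blast
lemma D_leib: "D u (sm f v) = sm (anc u f) v + sm f (D u v)" using D_leib_all by blast
lemma D_metric: "anc u (ip v w) = ip (D u v) w + ip v (D u w)" using D_metric_all by blast
lemma D_zero_right: "D u 0 = 0" using D_add_right[of u 0 0] by simp
lemma D_neg_right: "D u (- v) = - D u v" using D_add_right[of u v "-v"] D_zero_right by (simp add: add_eq_0_iff2)
lemma D_diff_right: "D u (v - w) = D u v - D u w" using D_add_right[of u v "-w"] D_neg_right by simp
lemma D_add_left: "D (x + y) u = D x u + D y u" using fl_add[OF D_fl, of x y u] by simp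
lemma D_sm_left: "D (sm f x) u = sm f (D x u)" using fl_sm[OF D_fl] by simp
lemma D_neg_left: "D (- x) u = - D x u" using fl_neg[OF D_fl] by simp
lemma D_diff_left: "D (x - y) u = D x u - D y u" using fl_diff[OF D_fl] by simp
lemma D_scaleR_left: "D (c *\<^sub>R x) u = c *\<^sub>R D x u" using fl_scaleR[OF D_fl] by simp
lemma D_zero_left: "D 0 u = 0" using fl_zero[OF D_fl] by simp

lemma D_G: "D u (G v) = G (D u v)"
proof (rule ip_ext)
  fix w
  have "anc u (ip (G v) w) = ip (G (D u v)) w + ip (G v) (D u w)"
    using PM_all unfolding Gmet_def by blast
  moreover have "anc u (ip (G v) w) = ip (D u (G v)) w + ip (G v) (D u w)" by (rule D_metric)
  ultimately show "ip (D u (G v)) w = ip (G (D u v)) w" by simp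
qed

lemma grp1: "(a::'a::ab_group_add) - b - c + d = 0 \<Longrightarrow> c = a - b + d"
  by (metis add.commute add_diff_eq diff_add_cancel eq_iff_diff_eq_0)

lemma br_eq: "br u v = D u v - D v u + adj ip (\<lambda>w. D w u) v"
proof -
  have "D u v - D v u - br u v + adj ip (\<lambda>w. D w u) v = 0"
    using TF unfolding torsion_free_def torsion_def by blast
  then show ?thesis by (simp add: grp1)
qed

lemma br_ip: "ip (br u v) w = ip (D u v) w - ip (D v u) w + ip v (D w u)"
  by (simp add: br_eq ip_lin adj_ip[OF D_fl])


lemma anc_der_all: "\<forall>u. derivation (anc u)" using CA unfolding courant_algebroid_def by (elim conjE)
lemma anc_der: "derivation (anc u)" using anc_der_all by blast
lemma anc_add: "anc u (a + b) = anc u a + anc u b" using anc_der unfolding derivation_def by blast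
lemma anc_zero: "anc u 0 = 0" using anc_add[of u 0 0] by simp

lemma N_formula:
  assumes K_fl: "f_linear sm K" and KK: "\<And>u. K (K u) = - u" and ipKK: "\<And>a b. ip (K a) (K b) = ip a b"
  shows "ip (nijenhuis br K u v) w = ip (covD_end D K (K u) v) w - ip (covD_end D K (K v) u) w
     + ip (covD_end D K w u) (K v) - ip (covD_end D K v u) (K w) + ip (covD_end D K (K w) u) v
     + ip (covD_end D K u v) (K w)"
proof -
  have DK: "\<And>x y. D x (K y) = covD_end D K x y + K (D x y)" unfolding covD_end_def by simp
  have ipK: "\<And>a b. ip (K a) b = - ip a (K b)"
  proof -
    fix a b
    have "ip (K a) b = ip (K a) (K (- K b))" by (simp add: KK fl_neg[OF K_fl])
    also have "\<dots> = - ip a (K b)" by (simp add: ipKK ip_lin)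
    finally show "ip (K a) b = - ip a (K b)" .
  qed
  show ?thesis
    unfolding nijenhuis_def
    by (simp add: ip_lin fl_add[OF K_fl] fl_diff[OF K_fl] fl_neg[OF K_fl] br_ip DK ipK KK algebra_simps
       ip_sym[of v "covD_end D K (K w) u"] ip_sym[of "covD_end D K w u" "K v"])
qed


abbreviation "S \<equiv> covD_end D J"

lemma S_eq: "S x y = D x (J y) - J (D x y)" unfolding covD_end_def ..
lemma D_J: "D x (J y) = S x y + J (D x y)" unfolding covD_end_def by simp

lemma S_fl_left: "f_linear sm (\<lambda>x. S x y)"
  unfolding f_linear_def covD_end_def
  by (simp add: D_add_left D_sm_left J_lin sm_diff algebra_simps)

lemma S_fl_right: "f_linear sm (S x)"
  unfolding f_linear_def covD_end_def
  by (simp add: D_add_right D_leib J_lin sm_diff sm_add algebra_simps)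

lemma S_add_left: "S (x + x') y = S x y + S x' y" using fl_add[OF S_fl_left] by simp
lemma S_neg_left: "S (- x) y = - S x y" using fl_neg[OF S_fl_left] by simp
lemma S_J: "S x (J y) = - J (S x y)"
  unfolding covD_end_def by (simp add: D_neg_right J_lin)
lemma S_G: "S x (G y) = G (S x y)"
  unfolding covD_end_def by (simp add: GJ[symmetric] D_G G_lin)

lemma ip_J_right: "ip a (J b) = - ip (J a) b" by (simp add: ip_J_left)

lemma s_skew: "ip (S x y) z = - ip (S x z) y"
proof -
  have "ip (J y) z + ip y (J z) = 0" by (simp add: ip_J_left)
  then have "anc x (ip (J y) z + ip y (J z)) = anc x 0" by (simp only:)
  then have "anc x (ip (J y) z) + anc x (ip y (J z)) = 0" by (simp only: anc_add anc_zero)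
  then have "ip (D x (J y)) z + ip (J y) (D x z) + (ip (D x y) (J z) + ip y (D x (J z))) = 0"
    by (simp add: D_metric)
  then have "ip (S x y) z + ip y (S x z) = 0"
    by (simp add: D_J ip_lin ip_J_left algebra_simps)
  then show ?thesis by (simp add: ip_sym[of y] add_eq_0_iff2)
qed

lemma s_Jswap: "ip (S x (J y)) z = ip (S x y) (J z)"
  by (simp add: S_J ip_lin ip_J_left)
lemma s_Gswap: "ip (S x (G y)) z = ip (S x y) (G z)"
  by (simp add: S_G ip_G_left)

lemma NJ: "ip (S (J u) v) w - ip (S (J v) u) w + ip (S w u) (J v) - ip (S v u) (J w) + ip (S (J w) u) v
     + ip (S u v) (J w) = 0"
proof -
  have "nijenhuis br J u v = 0" using intJ unfolding integrable_def by blast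
  then have "ip (nijenhuis br J u v) w = 0" by (simp add: ip_lin)
  then show ?thesis by (simp add: N_formula[OF J_fl JJ ip_JJ])
qed

lemma GJ_fl: "f_linear sm (G \<circ> J)"
  unfolding f_linear_def by (simp add: J_lin G_lin)

lemma NGJ: "ip (S (G (J u)) v) (G w) - ip (S (G (J v)) u) (G w) + ip (S w u) (J v) - ip (S v u) (J w)
     + ip (S (G (J w)) u) (G v) + ip (S u v) (J w) = 0"
proof -
  have KK: "\<And>u. (G \<circ> J) ((G \<circ> J) u) = - u" by (simp add: GJ[symmetric] G_lin J_lin)
  have KKip: "\<And>a b. ip ((G \<circ> J) a) ((G \<circ> J) b) = ip a b" by (simp add: ip_G_left ip_JJ)
  have SK: "\<And>x y. covD_end D (G \<circ> J) x y = G (S x y)"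
    unfolding covD_end_def by (simp add: D_G G_lin)
  have SK': "\<And>x y. covD_end D (\<lambda>a. G (J a)) x y = G (S x y)"
    using SK unfolding comp_def .
  have "nijenhuis br (G \<circ> J) u v = 0" using intGJ unfolding integrable_def by blast
  then have "ip (nijenhuis br (G \<circ> J) u v) w = 0" by (simp add: ip_lin)
  then show ?thesis by (simp add: N_formula[OF GJ_fl KK KKip] SK SK' ip_G_left)
qed

lemma double0: "(a::'a::real_vector) + a = 0 \<Longrightarrow> a = 0"
  by (metis scaleR_2 scaleR_eq_0_iff zero_neq_numeral)

lemma t0: "ip (S (J u) v) w = ip (S (G (J u)) v) (G w)"
proof -
  let ?t = "\<lambda>u v w. ip (S (J u) v) w - ip (S (G (J u)) v) (G w)"
  have e1: "?t u v w - ?t v u w + ?t w u v =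
    (ip (S (J u) v) w - ip (S (J v) u) w + ip (S w u) (J v) - ip (S v u) (J w) + ip (S (J w) u) v
     + ip (S u v) (J w)) - (ip (S (G (J u)) v) (G w) - ip (S (G (J v)) u) (G w) + ip (S w u) (J v) - ip (S v u) (J w)
     + ip (S (G (J w)) u) (G v) + ip (S u v) (J w))" by (simp add: algebra_simps)
  have R1: "?t u v w - ?t v u w + ?t w u v = 0" unfolding e1 NJ NGJ by simp
  have e2: "?t u v w + ?t v u w - ?t w u v =
    (ip (S (J u) (G v)) (G w) - ip (S (J (G v)) u) (G w) + ip (S (G w) u) (J (G v)) - ip (S (G v) u) (J (G w)) + ip (S (J (G w)) u) (G v)
     + ip (S u (G v)) (J (G w))) - (ip (S (G (J u)) (G v)) (G (G w)) - ip (S (G (J (G v))) u) (G (G w)) + ip (S (G w) u) (J (G v)) - ip (S (G v) u) (J (G w))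
     + ip (S (G (J (G w))) u) (G (G v)) + ip (S u (G v)) (J (G w)))"
    by (simp add: algebra_simps s_Gswap GJ[symmetric])
  have R2: "?t u v w + ?t v u w - ?t w u v = 0" unfolding e2 NJ NGJ by simp
  have "?t u v w + ?t u v w = 0"
  proof -
    have "?t u v w + ?t u v w = (?t u v w - ?t v u w + ?t w u v) + (?t u v w + ?t v u w - ?t w u v)"
      by (simp add: algebra_simps)
    then show ?thesis using R1 R2 by simp
  qed
  then have "?t u v w = 0" by (rule double0)
  then show ?thesis by simp
qed

lemma pure: "ip (S (G x) y) (G z) = ip (S x y) z"
  using t0[of "J x" y z] by (simp add: S_neg_left G_lin ip_lin)


lemma fl_add_fun: "f_linear sm T1 \<Longrightarrow> f_linear sm T2 \<Longrightarrow> f_linear sm (\<lambda>x. T1 x + T2 x)"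
  unfolding f_linear_def by (simp add: sm_add algebra_simps)
lemma fl_diff_fun: "f_linear sm T1 \<Longrightarrow> f_linear sm T2 \<Longrightarrow> f_linear sm (\<lambda>x. T1 x - T2 x)"
  unfolding f_linear_def by (simp add: sm_diff algebra_simps)
lemma fl_neg_fun: "f_linear sm T1 \<Longrightarrow> f_linear sm (\<lambda>x. - T1 x)"
  unfolding f_linear_def by (simp add: sm_neg algebra_simps)
lemma fl_scaleR_fun: "f_linear sm T1 \<Longrightarrow> f_linear sm (\<lambda>x. c *\<^sub>R T1 x)"
  unfolding f_linear_def by (simp add: sm_scaleR algebra_simps)
lemma fl_comp_fun: "f_linear sm T1 \<Longrightarrow> f_linear sm T2 \<Longrightarrow> f_linear sm (\<lambda>x. T1 (T2 x))"
  unfolding f_linear_def by simp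

lemma adj_fl: assumes "f_linear sm T" shows "f_linear sm (adj ip T)"
  unfolding f_linear_def
proof (intro conjI allI)
  fix u v
  show "adj ip T (u + v) = adj ip T u + adj ip T v"
    by (rule ip_ext) (simp add: adj_ip[OF assms] ip_lin)
next
  fix f u
  show "adj ip T (sm f u) = sm f (adj ip T u)"
    by (rule ip_ext) (simp add: adj_ip[OF assms] ip_sm_left)
qed

abbreviation "As \<equiv> A_sym ip D J"

lemma A_end_eq: "A_end D J u = (\<lambda>v. S v u)" unfolding A_end_def by (rule ext) simp
lemma A_end_fl: "f_linear sm (A_end D J u)" unfolding A_end_eq by (rule S_fl_left)
lemma A_end_app: "A_end D J u y = S y u" unfolding A_end_def ..
lemma adj_A: "ip (adj ip (A_end D J u) y) z = ip y (S z u)"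
  by (simp add: adj_ip[OF A_end_fl] A_end_app)

lemma As_fl_right: "f_linear sm (As u)"
proof -
  have "As u = (\<lambda>y. (1/2) *\<^sub>R (A_end D J u y + adj ip (A_end D J u) y))"
    unfolding A_sym_def by (rule ext) simp
  then show ?thesis
    by (simp add: fl_scaleR_fun fl_add_fun A_end_fl adj_fl)
qed

lemma As_fl_left: "f_linear sm (\<lambda>x. As x y)"
  unfolding f_linear_def
proof (intro conjI allI)
  fix u v
  have "adj ip (A_end D J (u + v)) y = adj ip (A_end D J u) y + adj ip (A_end D J v) y"
    by (rule ip_ext) (simp add: adj_A ip_lin A_end_app fl_add[OF S_fl_right])
  then show "As (u + v) y = As u y + As v y"
    unfolding A_sym_def by (simp add: A_end_app fl_add[OF S_fl_right] algebra_simps)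
next
  fix f u
  have "adj ip (A_end D J (sm f u)) y = sm f (adj ip (A_end D J u) y)"
    by (rule ip_ext) (simp add: adj_A ip_sm_left ip_sm_right A_end_app fl_sm[OF S_fl_right])
  then show "As (sm f u) y = sm f (As u y)"
    unfolding A_sym_def by (simp add: A_end_app fl_sm[OF S_fl_right] sm_add sm_scaleR)
qed

lemma As_ip: "ip (As u y) z = (1/2) *\<^sub>R (ip (S y u) z + ip (S z u) y)"
  unfolding A_sym_def by (simp add: ip_lin adj_A A_end_app ip_sym[of y])

definition "B u v = - ((1/2) *\<^sub>R J (S u v)) - (1/4) *\<^sub>R (As u (J v) + J (As u v))"

lemma Dt_eq: "D_tilde ip D J u v = D u v + B u v"
  unfolding D_tilde_def B_def by (simp add: algebra_simps)

lemma B_fl_right: "f_linear sm (B u)"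
proof -
  have "B u = (\<lambda>v. - ((1/2) *\<^sub>R J (S u v)) - (1/4) *\<^sub>R (As u (J v) + J (As u v)))"
    unfolding B_def by (rule ext) simp
  then show ?thesis
    using fl_diff_fun[OF fl_neg_fun[OF fl_scaleR_fun[where c="1/2", OF fl_comp_fun[OF J_fl S_fl_right]]]
      fl_scaleR_fun[where c="1/4", OF fl_add_fun[OF fl_comp_fun[OF As_fl_right J_fl] fl_comp_fun[OF J_fl As_fl_right]]]]
    by simp
qed

lemma B_fl_left: "f_linear sm (\<lambda>x. B x v)"
proof -
  have "(\<lambda>x. B x v) = (\<lambda>x. - ((1/2) *\<^sub>R J (S x v)) - (1/4) *\<^sub>R (As x (J v) + J (As x v)))"
    unfolding B_def by (rule ext) simp
  then show ?thesis
    using fl_diff_fun[OF fl_neg_fun[OF fl_scaleR_fun[where c="1/2", OF fl_comp_fun[OF J_fl S_fl_left]]]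
      fl_scaleR_fun[where c="1/4", OF fl_add_fun[OF As_fl_left fl_comp_fun[OF J_fl As_fl_left]]]]
    by simp
qed

lemma b_formula: "ip (B u v) w = (1/2) *\<^sub>R ip (S u v) (J w)
   - (1/8) *\<^sub>R (ip (S (J v) u) w + ip (S w u) (J v) - ip (S v u) (J w) - ip (S (J w) u) v)"
  unfolding B_def by (simp add: ip_lin ip_J_left As_ip algebra_simps)


lemma b_skew: "ip (B u v) w = - ip (B u w) v"
proof -
  have h: "ip (S u w) (J v) = - ip (S u v) (J w)"
    using s_skew[of u w "J v"] s_Jswap[of u v w] by simp
  show ?thesis by (simp add: b_formula h algebra_simps)
qed

lemma Dt_fl_left: "f_linear sm (\<lambda>x. D_tilde ip D J x u)"
  unfolding Dt_eq by (rule fl_add_fun[OF D_fl B_fl_left])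

lemma Dt_conn: "gen_connection sm ip anc (D_tilde ip D J)"
  unfolding gen_connection_def
proof (intro conjI allI)
  fix u v w
  show "D_tilde ip D J u (v + w) = D_tilde ip D J u v + D_tilde ip D J u w"
    by (simp add: Dt_eq D_add_right fl_add[OF B_fl_right] algebra_simps)
next
  fix c u v
  show "D_tilde ip D J u (c *\<^sub>R v) = c *\<^sub>R D_tilde ip D J u v"
    by (simp add: Dt_eq D_scaleR_right fl_scaleR[OF B_fl_right] algebra_simps)
next
  fix u
  show "f_linear sm (\<lambda>x. D_tilde ip D J x u)" by (rule Dt_fl_left)
next
  fix u f v
  show "D_tilde ip D J u (sm f v) = sm (anc u f) v + sm f (D_tilde ip D J u v)"
    by (simp add: Dt_eq D_leib fl_sm[OF B_fl_right] sm_add algebra_simps)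
next
  fix u v w
  have "ip (B u v) w + ip v (B u w) = 0"
    by (simp add: b_skew[of u v w] ip_sym[of v])
  then show "anc u (ip v w) = ip (D_tilde ip D J u v) w + ip v (D_tilde ip D J u w)"
    by (simp add: Dt_eq D_metric ip_lin algebra_simps)
qed

lemma Dt_torsion: "torsion ip br (D_tilde ip D J) u v = 0"
proof (rule ip_ext)
  fix w
  have "ip (torsion ip br (D_tilde ip D J) u v) w
     = ip (D_tilde ip D J u v) w - ip (D_tilde ip D J v u) w - ip (br u v) w + ip v (D_tilde ip D J w u)"
    unfolding torsion_def by (simp only: ip_lin adj_ip[OF Dt_fl_left])
  also have "\<dots> = ip (B u v) w - ip (B v u) w + ip (B w u) v"
    by (simp add: Dt_eq br_ip ip_lin ip_sym[of v "B w u"])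
  also have "\<dots> = 0"
  proof -
    have c1: "ip (S (J v) u) w = - ip (S (J v) w) u" by (rule s_skew)
    have c2: "ip (S (J w) v) u = - ip (S (J w) u) v" by (rule s_skew)
    have c3: "ip (S (J u) w) v = - ip (S (J u) v) w" by (rule s_skew)
    have c4: "ip (S v u) (J w) = - ip (S v w) (J u)" using s_skew[of v u "J w"] s_Jswap[of v w u] by simp
    have c5: "ip (S w v) (J u) = - ip (S w u) (J v)" using s_skew[of w v "J u"] s_Jswap[of w u v] by simp
    have c6: "ip (S u w) (J v) = - ip (S u v) (J w)" using s_skew[of u w "J v"] s_Jswap[of u v w] by simp
    have "ip (B u v) w - ip (B v u) w + ip (B w u) v = (1/4) *\<^sub>R (ip (S (J u) v) w - ip (S (J v) u) w + ip (S w u) (J v) - ip (S v u) (J w) + ip (S (J w) u) v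
     + ip (S u v) (J w))"
      by (simp add: b_formula c1 c2 c3 c4 c5 c6 algebra_simps flip: scaleR_left_diff_distrib scaleR_left_distrib)
    also have "\<dots> = 0" by (simp only: NJ scaleR_zero_right)
    finally show ?thesis .
  qed
  finally show "ip (torsion ip br (D_tilde ip D J) u v) w = ip 0 w" by (simp add: ip_lin)
qed

lemma b_G: "ip (B u v) (G w) = ip (B u (G v)) w"
proof -
  have g1: "ip (S u v) (J (G w)) = ip (S u (G v)) (J w)" by (simp add: s_Gswap GJ)
  have g2: "ip (S (J v) u) (G w) = ip (S (J (G v)) u) w" using pure[of "J v" u "G w"] by (simp add: GJ)
  have g3: "ip (S (G w) u) (J v) = ip (S w u) (J (G v))" using pure[of "G w" u "J v"] by (simp add: GJ)
  have g4: "ip (S v u) (J (G w)) = ip (S (G v) u) (J w)" using pure[of "G v" u "J w"] by (simp add: GJ)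
  have g5: "ip (S (J (G w)) u) v = ip (S (J w) u) (G v)" using pure[of "J w" u "G v"] by (simp add: GJ)
  show ?thesis by (simp add: b_formula G_lin GJ g1 g2 g3 g4 g5)
qed

lemma Dt_PM: "parallel_metric ip anc G (D_tilde ip D J)"
  unfolding parallel_metric_def Gmet_def
proof (intro allI)
  fix u v w
  have "anc u (ip (G v) w) = ip (G (D u v)) w + ip (G v) (D u w)"
    using PM_all unfolding Gmet_def by blast
  moreover have "ip (G (B u v)) w + ip (G v) (B u w) = 0"
  proof -
    have "ip (G v) (B u w) = ip (B u w) (G v)" by (rule ip_sym)
    also have "\<dots> = - ip (B u (G v)) w" by (rule b_skew)
    finally have 1: "ip (G v) (B u w) = - ip (B u (G v)) w" .
    have 2: "ip (G (B u v)) w = ip (B u (G v)) w" by (simp only: ip_G_left b_G)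
    show ?thesis unfolding 1 2 by simp
  qed
  ultimately show "anc u (ip (G v) w) = ip (G (D_tilde ip D J u v)) w + ip (G v) (D_tilde ip D J u w)"
    by (simp add: Dt_eq G_lin ip_lin algebra_simps)
qed

lemma Dt_PE: "parallel_end (D_tilde ip D J) J"
  unfolding parallel_end_def
proof (intro allI)
  fix u v
  have "B u (J v) - J (B u v) = - S u v"
    unfolding B_def by (simp add: J_lin S_J fl_neg[OF As_fl_right] algebra_simps, simp flip: scaleR_left_distrib)
  then show "covD_end (D_tilde ip D J) J u v = 0"
    unfolding covD_end_def by (simp add: Dt_eq D_J J_lin algebra_simps flip: scaleR_left_distrib)
qed

end

theorem theorem5p4:
  fixes sm :: "'f::{comm_ring_1,real_algebra_1} \<Rightarrow> 'e::real_vector \<Rightarrow> 'e"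
    and ip :: "'e \<Rightarrow> 'e \<Rightarrow> 'f" and br :: "'e \<Rightarrow> 'e \<Rightarrow> 'e" and anc :: "'e \<Rightarrow> 'f \<Rightarrow> 'f"
    and Gend J :: "'e \<Rightarrow> 'e" and D :: "'e \<Rightarrow> 'e \<Rightarrow> 'e"
  assumes "courant_algebroid sm ip br anc"
    and "gen_kaehler sm ip br Gend J"
    and "levi_civita sm ip br anc Gend D"
  shows "gen_connection sm ip anc (D_tilde ip D J)
       \<and> torsion_free ip br (D_tilde ip D J)
       \<and> parallel_metric ip anc Gend (D_tilde ip D J)
       \<and> parallel_end (D_tilde ip D J) J"
proof -
  interpret GKL sm ip br anc Gend J D using assms by unfold_locales
  show ?thesis using Dt_conn Dt_torsion Dt_PM Dt_PE unfolding torsion_free_def by blast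
qed

end
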